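(* For every positive integer $M$ and every real $s>M$, $$\frac{1}{(\pi/2)^M}\int_{\{u\in\mathbb R^M:\ \|u\|_1>s\}}\ \prod_{j=1}^M\frac{du_j}{(1+u_j^2)^2}\le\frac{M}{(s-M)^2}.$$
   Context: Here $\pi=3.14159\ldots$ and $\|u\|_1=\sum_{j=1}^M|u_j|$. *)

theory Defs
  imports "HOL-Analysis.Analysis"
begin

end

theory Submission imports Defs "HOL-Analysis.Analysis" begin

definition gg :: "real \<Rightarrow> real" where "gg x = 1 / (1 + x\<^sup>2)\<^sup>2"

lemma gg_nonneg: "0 \<le> gg x" by (simp add: gg_def)
lemma gg_meas[measurable]: "gg \<in> borel_measurable borel"
  unfolding gg_def by measurable

lemma even_int:
  fixes f :: "real \<Rightarrow> real"
  assumes [measurable]: "f \<in> borel_measurable borel" and nn: "\<And>x. 0 \<le> f x"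
    and ev: "\<And>x. f (-x) = f x"
  shows "(\<integral>\<^sup>+x. ennreal (f x) \<partial>lborel) = 2 * (\<integral>\<^sup>+x. ennreal (f x) * indicator {0..} x \<partial>lborel)"
proof -
  have "(\<integral>\<^sup>+x. ennreal (f x) \<partial>lborel) = (\<integral>\<^sup>+x. ennreal (f x) * indicator {0..} x + ennreal (f x) * indicator {..<0} x \<partial>lborel)"
    by (intro nn_integral_cong) (auto split: split_indicator)
  also have "\<dots> = (\<integral>\<^sup>+x. ennreal (f x) * indicator {0..} x \<partial>lborel) + (\<integral>\<^sup>+x. ennreal (f x) * indicator {..<0} x \<partial>lborel)"
    by (intro nn_integral_add) auto
  also have "(\<integral>\<^sup>+x. ennreal (f x) * indicator {..<0} x \<partial>lborel) = \<bar>-1::real\<bar> * (\<integral>\<^sup>+x. ennreal (f (0 + (-1) * x)) * indicator {..<0} (0 + (-1) * x) \<partial>lborel)"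
    by (rule nn_integral_real_affine) auto
  also have "\<dots> = (\<integral>\<^sup>+x. ennreal (f x) * indicator {0<..} x \<partial>lborel)"
  proof -
    have e: "\<And>x. ennreal (f (0 + (-1) * x)) * indicator {..<0} (0 + (-1) * x) = ennreal (f x) * indicator {0<..} (x::real)"
      by (auto simp: ev split: split_indicator)
    show ?thesis by (simp only: e) simp
  qed
  also have "\<dots> = (\<integral>\<^sup>+x. ennreal (f x) * indicator {0..} x \<partial>lborel)"
  proof (rule nn_integral_cong_AE)
    show "AE x in lborel. ennreal (f x) * indicator {0<..} x = ennreal (f x) * indicator {0..} x"
      using AE_lborel_singleton[of "0::real"]
      by (rule eventually_mono) (auto split: split_indicator)
  qed
  finally show ?thesis by (simp add: mult_2)
qed

lemma lim1: "((\<lambda>x::real. x / (1 + x\<^sup>2)) \<longlongrightarrow> 0) at_top"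
proof -
  have "((\<lambda>x::real. inverse x) \<longlongrightarrow> 0) at_top" by (rule tendsto_inverse_0_at_top[OF filterlim_ident])
  then have "filterlim (\<lambda>x::real. inverse x + x) at_top at_top"
    by (rule filterlim_tendsto_add_at_top) (rule filterlim_ident)
  then have l: "((\<lambda>x::real. inverse (inverse x + x)) \<longlongrightarrow> 0) at_top" by (rule tendsto_inverse_0_at_top)
  have ev: "eventually (\<lambda>x::real. x / (1 + x\<^sup>2) = inverse (inverse x + x)) at_top"
    using eventually_gt_at_top[of "0::real"]
    by (rule eventually_mono) (simp add: field_simps power2_eq_square)
  show ?thesis by (subst tendsto_cong[OF ev]) (rule l)
qed

lemma lim2: "((\<lambda>x::real. - 1 / (2 * (1 + x\<^sup>2))) \<longlongrightarrow> 0) at_top"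
proof -
  have "filterlim (\<lambda>x::real. x\<^sup>2) at_top at_top" by (intro filterlim_pow_at_top filterlim_ident) simp
  then have f1: "filterlim (\<lambda>x::real. 1 + x\<^sup>2) at_top at_top"
    by (rule filterlim_tendsto_add_at_top[OF tendsto_const])
  have "filterlim (\<lambda>x::real. 2 * (1 + x\<^sup>2)) at_top at_top"
    using filterlim_tendsto_pos_mult_at_top[OF tendsto_const _ f1, of 2] by simp
  then have "((\<lambda>x::real. inverse (2 * (1 + x\<^sup>2))) \<longlongrightarrow> 0) at_top"
    by (rule tendsto_inverse_0_at_top)
  then have "((\<lambda>x::real. - inverse (2 * (1 + x\<^sup>2))) \<longlongrightarrow> - 0) at_top"
    by (rule tendsto_minus)
  then show ?thesis by (simp add: divide_inverse)
qed

lemma two: "2 * ennreal (pi/4) = ennreal (pi/2)"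
  by (subst ennreal_numeral[symmetric], subst ennreal_mult[symmetric]) auto

lemma int_g: "(\<integral>\<^sup>+x. ennreal (gg x) \<partial>lborel) = ennreal (pi/2)"
proof -
  have "(\<integral>\<^sup>+x. ennreal (gg x) * indicator {0..} x \<partial>lborel) = ennreal (pi/4 - (0 / (1 + 0\<^sup>2) + arctan 0) / 2)"
  proof (rule nn_integral_FTC_atLeast)
    show "((\<lambda>x::real. (x / (1 + x\<^sup>2) + arctan x) / 2) \<longlongrightarrow> pi/4) at_top"
    proof -
      note lim1
      then have "((\<lambda>x::real. (x / (1 + x\<^sup>2) + arctan x) / 2) \<longlongrightarrow> (0 + pi/2)/2) at_top"
        by (intro tendsto_intros tendsto_arctan_at_top) auto
      then show ?thesis by simp
    qed
    fix x :: real
    show "((\<lambda>x. (x / (1 + x\<^sup>2) + arctan x) / 2) has_real_derivative gg x) (at x)"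
    proof -
      have p0: "1 + x\<^sup>2 > 0" by (simp add: add_pos_nonneg)
      then have p: "1 + x\<^sup>2 \<noteq> 0" "2 * (1 + x\<^sup>2) \<noteq> 0" by auto
      show ?thesis unfolding gg_def
        apply (auto intro!: derivative_eq_intros simp: p)
        using p apply (simp add: divide_simps)
        apply (simp add: power2_eq_square algebra_simps)
        done
    qed
  qed (auto simp: gg_nonneg)
  then have h: "(\<integral>\<^sup>+x. ennreal (gg x) * indicator {0..} x \<partial>lborel) = ennreal (pi/4)"
    by simp
  have "(\<integral>\<^sup>+x. ennreal (gg x) \<partial>lborel) = 2 * (\<integral>\<^sup>+x. ennreal (gg x) * indicator {0..} x \<partial>lborel)"
    by (rule even_int) (auto simp: gg_nonneg gg_def)
  also have "\<dots> = ennreal 2 * ennreal (pi/4)" unfolding h by simp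
  also have "\<dots> = ennreal (pi/2)" by (subst ennreal_mult[symmetric]) auto
  finally show ?thesis .
qed

lemma int_g2: "(\<integral>\<^sup>+x. ennreal (x\<^sup>2 * gg x) \<partial>lborel) = ennreal (pi/2)"
proof -
  have "(\<integral>\<^sup>+x. ennreal (x\<^sup>2 * gg x) * indicator {0..} x \<partial>lborel) = ennreal (pi/4 - (arctan 0 - 0 / (1 + 0\<^sup>2)) / 2)"
  proof (rule nn_integral_FTC_atLeast)
    show "((\<lambda>x::real. (arctan x - x / (1 + x\<^sup>2)) / 2) \<longlongrightarrow> pi/4) at_top"
    proof -
      note lim1
      then have "((\<lambda>x::real. (arctan x - x / (1 + x\<^sup>2)) / 2) \<longlongrightarrow> (pi/2 - 0)/2) at_top"
        by (intro tendsto_intros tendsto_arctan_at_top) auto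
      then show ?thesis by simp
    qed
    fix x :: real
    show "((\<lambda>x. (arctan x - x / (1 + x\<^sup>2)) / 2) has_real_derivative x\<^sup>2 * gg x) (at x)"
    proof -
      have p0: "1 + x\<^sup>2 > 0" by (simp add: add_pos_nonneg)
      then have p: "1 + x\<^sup>2 \<noteq> 0" "2 * (1 + x\<^sup>2) \<noteq> 0" by auto
      show ?thesis unfolding gg_def
        apply (auto intro!: derivative_eq_intros simp: p)
        using p apply (simp add: divide_simps)
        apply (simp add: power2_eq_square algebra_simps)
        done
    qed
  qed (auto simp: gg_nonneg)
  then have h: "(\<integral>\<^sup>+x. ennreal (x\<^sup>2 * gg x) * indicator {0..} x \<partial>lborel) = ennreal (pi/4)"
    by simp
  have "(\<integral>\<^sup>+x. ennreal (x\<^sup>2 * gg x) \<partial>lborel) = 2 * (\<integral>\<^sup>+x. ennreal (x\<^sup>2 * gg x) * indicator {0..} x \<partial>lborel)"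
    by (rule even_int) (auto simp: gg_nonneg gg_def)
  also have "\<dots> = ennreal 2 * ennreal (pi/4)" unfolding h by simp
  also have "\<dots> = ennreal (pi/2)" by (subst ennreal_mult[symmetric]) auto
  finally show ?thesis .
qed

lemma half2: "2 * inverse (2::ennreal) = 1"
proof -
  have "inverse (2::ennreal) = ennreal (inverse 2)" using inverse_ennreal[of 2] by simp
  then have "2 * inverse (2::ennreal) = ennreal 2 * ennreal (inverse 2)" by simp
  also have "\<dots> = 1" by (subst ennreal_mult[symmetric]) auto
  finally show ?thesis .
qed

lemma int_g1: "(\<integral>\<^sup>+x. ennreal (\<bar>x\<bar> * gg x) \<partial>lborel) = ennreal 1"
proof -
  have "(\<integral>\<^sup>+x. ennreal (\<bar>x\<bar> * gg x) * indicator {0..} x \<partial>lborel) = (\<integral>\<^sup>+x. ennreal (x * gg x) * indicator {0..} x \<partial>lborel)"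
    by (intro nn_integral_cong) (auto split: split_indicator)
  also have "\<dots> = ennreal (0 - (- 1 / (2 * (1 + 0\<^sup>2))))"
  proof (rule nn_integral_FTC_atLeast)
    show "((\<lambda>x::real. - 1 / (2 * (1 + x\<^sup>2))) \<longlongrightarrow> 0) at_top" by (rule lim2)
    fix x :: real
    show "((\<lambda>x. - 1 / (2 * (1 + x\<^sup>2))) has_real_derivative x * gg x) (at x)"
    proof -
      have p0: "1 + x\<^sup>2 > 0" by (simp add: add_pos_nonneg)
      then have p: "1 + x\<^sup>2 \<noteq> 0" "2 * (1 + x\<^sup>2) \<noteq> 0" by auto
      show ?thesis unfolding gg_def
        apply (rule derivative_eq_intros refl)+
        using p apply simp
        using p apply (simp add: divide_simps)
        apply (simp add: power2_eq_square algebra_simps)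
        done
    qed
  qed (auto simp: gg_nonneg)
  finally have h: "(\<integral>\<^sup>+x. ennreal (\<bar>x\<bar> * gg x) * indicator {0..} x \<partial>lborel) = ennreal (1/2)"
    by simp
  have "(\<integral>\<^sup>+x. ennreal (\<bar>x\<bar> * gg x) \<partial>lborel) = 2 * (\<integral>\<^sup>+x. ennreal (\<bar>x\<bar> * gg x) * indicator {0..} x \<partial>lborel)"
    by (rule even_int) (auto simp: gg_nonneg gg_def)
  also have "\<dots> = ennreal 2 * ennreal (1/2)" unfolding h by simp
  also have "\<dots> = ennreal 1" by (subst ennreal_mult[symmetric]) auto
  finally show ?thesis .
qed


lemma prod_int:
  fixes \<phi> :: "'n::finite \<Rightarrow> real \<Rightarrow> real"
  assumes meas[measurable]: "\<And>j. \<phi> j \<in> borel_measurable borel" and nn: "\<And>j x. 0 \<le> \<phi> j x"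
  shows "(\<integral>\<^sup>+u. ennreal (\<Prod>j\<in>UNIV. \<phi> j (u$j)) \<partial>(lborel::(real^'n) measure)) = (\<Prod>j\<in>UNIV. \<integral>\<^sup>+x. ennreal (\<phi> j x) \<partial>lborel)"
proof -
  have B: "(Basis::(real^'n) set) = (\<lambda>i. axis i 1) ` UNIV" by (auto simp: Basis_vec_def)
  have inj: "inj_on (\<lambda>i::'n. axis i (1::real)) UNIV" by (auto simp: inj_on_def axis_eq_axis)
  have eq: "ennreal (\<Prod>j\<in>UNIV. \<phi> j (u$j)) = (\<Prod>b\<in>Basis. ennreal (\<phi> (axis_index b) (u \<bullet> b)))" for u :: "real^'n"
    by (simp add: B prod.reindex[OF inj] inner_axis prod_ennreal nn)
  have "(\<integral>\<^sup>+u. ennreal (\<Prod>j\<in>UNIV. \<phi> j (u$j)) \<partial>(lborel::(real^'n) measure)) = (\<integral>\<^sup>+u. (\<Prod>b\<in>Basis. ennreal (\<phi> (axis_index b) (u \<bullet> b))) \<partial>(lborel::(real^'n) measure))"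
    by (simp only: eq)
  also have "\<dots> = (\<Prod>b\<in>(Basis::(real^'n) set). \<integral>\<^sup>+x. ennreal (\<phi> (axis_index b) x) \<partial>lborel)"
    by (rule nn_integral_lborel_prod) auto
  also have "\<dots> = (\<Prod>j\<in>UNIV. \<integral>\<^sup>+x. ennreal (\<phi> j x) \<partial>lborel)"
    by (simp add: B prod.reindex[OF inj])
  finally show ?thesis .
qed

definition ww :: "real^'n::finite \<Rightarrow> real" where "ww u = (\<Prod>j\<in>UNIV. gg (u$j))"

lemma ww_nonneg: "0 \<le> ww u" by (simp add: ww_def prod_nonneg gg_nonneg)
lemma ww_meas[measurable]: "ww \<in> borel_measurable borel" unfolding ww_def by measurable

lemma pi_ge2: "2 \<le> pi" using pi_gt3 by linarith

lemma H0: "has_bochner_integral lborel (ww :: real^'n::finite \<Rightarrow> real) ((pi/2)^CARD('n))"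
proof (rule has_bochner_integral_nn_integral)
  show "(\<integral>\<^sup>+u. ennreal (ww u) \<partial>(lborel::(real^'n) measure)) = ennreal ((pi/2)^CARD('n))"
    unfolding ww_def
    by (subst prod_int) (auto simp: gg_nonneg int_g ennreal_power)
qed (auto simp: ww_nonneg)

lemma H1: "has_bochner_integral lborel (\<lambda>u::real^'n::finite. \<bar>u$i\<bar> * ww u) ((pi/2)^CARD('n) * (2/pi))"
proof (rule has_bochner_integral_nn_integral)
  let ?\<phi> = "\<lambda>j x. (if j = i then \<bar>x\<bar> else 1) * gg x"
  have e: "\<bar>u$i\<bar> * ww u = (\<Prod>j\<in>UNIV. ?\<phi> j (u$j))" for u :: "real^'n"
    by (simp add: ww_def prod.distrib prod.delta)
  have f: "(\<integral>\<^sup>+x. ennreal (?\<phi> j x) \<partial>lborel) = ennreal (pi/2 * (if j = i then 2/pi else 1))" for j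
    by (cases "j = i") (auto simp: int_g int_g1)
  have "(\<integral>\<^sup>+u. ennreal (\<bar>u$i\<bar> * ww u) \<partial>(lborel::(real^'n) measure)) = (\<Prod>j\<in>UNIV. ennreal (pi/2 * (if j = i then 2/pi else 1)))"
    unfolding e by (subst prod_int) (auto simp: gg_nonneg f)
  also have "\<dots> = ennreal ((pi/2)^CARD('n) * (2/pi))"
  proof -
    have "(\<Prod>j\<in>UNIV. pi/2 * (if j = i then 2/pi else 1)) = (pi/2)^CARD('n) * (2/pi)"
      by (simp only: prod.distrib prod_constant prod.delta) simp
    moreover have "(\<Prod>j\<in>UNIV. ennreal (pi/2 * (if j = i then 2/pi else 1))) = ennreal (\<Prod>j\<in>UNIV. pi/2 * (if j = i then 2/pi else 1))"
      by (rule prod_ennreal) simp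
    ultimately show ?thesis by simp
  qed
  finally show "(\<integral>\<^sup>+u. ennreal (\<bar>u$i\<bar> * ww u) \<partial>(lborel::(real^'n) measure)) = ennreal ((pi/2)^CARD('n) * (2/pi))" .
qed (auto simp: ww_nonneg)


lemma H2: "has_bochner_integral lborel (\<lambda>u::real^'n::finite. \<bar>u$i\<bar> * \<bar>u$k\<bar> * ww u)
             ((pi/2)^CARD('n) * (if i = k then 1 else (2/pi)^2))"
proof (rule has_bochner_integral_nn_integral)
  show "(\<integral>\<^sup>+u. ennreal (\<bar>u$i\<bar> * \<bar>u$k\<bar> * ww u) \<partial>(lborel::(real^'n) measure)) =
      ennreal ((pi/2)^CARD('n) * (if i = k then 1 else (2/pi)^2))"
  proof (cases "i = k")
    case True
    let ?\<phi> = "\<lambda>j x. (if j = i then x\<^sup>2 else 1) * gg x"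
    have e: "\<bar>u$i\<bar> * \<bar>u$k\<bar> * ww u = (\<Prod>j\<in>UNIV. ?\<phi> j (u$j))" for u :: "real^'n"
      using True by (simp add: ww_def prod.distrib prod.delta power2_eq_square abs_mult_self_eq)
    have f: "(\<integral>\<^sup>+x. ennreal (?\<phi> j x) \<partial>lborel) = ennreal (pi/2)" for j
      by (cases "j = i") (auto simp: int_g int_g2)
    have "(\<integral>\<^sup>+u. ennreal (\<bar>u$i\<bar> * \<bar>u$k\<bar> * ww u) \<partial>(lborel::(real^'n) measure)) = (\<Prod>j\<in>(UNIV::'n set). ennreal (pi/2))"
      unfolding e by (subst prod_int) (auto simp: gg_nonneg f)
    then show ?thesis using True by (simp add: ennreal_power)
  next
    case False
    let ?\<phi> = "\<lambda>j x. (if j = i then \<bar>x\<bar> else 1) * ((if j = k then \<bar>x\<bar> else 1) * gg x)"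
    have e: "\<bar>u$i\<bar> * \<bar>u$k\<bar> * ww u = (\<Prod>j\<in>UNIV. ?\<phi> j (u$j))" for u :: "real^'n"
      by (simp add: ww_def prod.distrib prod.delta)
    have f: "(\<integral>\<^sup>+x. ennreal (?\<phi> j x) \<partial>lborel) = ennreal (pi/2 * ((if j = i then 2/pi else 1) * (if j = k then 2/pi else 1)))" for j
      using False by (cases "j = i"; cases "j = k") (auto simp: int_g int_g1)
    have "(\<integral>\<^sup>+u. ennreal (\<bar>u$i\<bar> * \<bar>u$k\<bar> * ww u) \<partial>(lborel::(real^'n) measure)) = (\<Prod>j\<in>UNIV. ennreal (pi/2 * ((if j = i then 2/pi else 1) * (if j = k then 2/pi else 1))))"
      unfolding e by (subst prod_int) (auto simp: gg_nonneg f)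
    also have "\<dots> = ennreal ((pi/2)^CARD('n) * (2/pi)^2)"
    proof -
      have "(\<Prod>j\<in>UNIV. pi/2 * ((if j = i then 2/pi else 1) * (if j = k then 2/pi else 1))) = (pi/2)^CARD('n) * ((2/pi) * (2/pi))"
        by (simp only: prod.distrib prod_constant prod.delta) simp
      moreover have "(\<Prod>j\<in>UNIV. ennreal (pi/2 * ((if j = i then 2/pi else 1) * (if j = k then 2/pi else 1)))) = ennreal (\<Prod>j\<in>UNIV. pi/2 * ((if j = i then 2/pi else 1) * (if j = k then 2/pi else 1)))"
        by (rule prod_ennreal) simp
      ultimately show ?thesis by (simp add: power2_eq_square)
    qed
    finally show ?thesis using False by simp
  qed
qed (auto simp: ww_nonneg)


theorem lemma4:
  fixes s :: real
  assumes "s > real CARD('n::finite)"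
  shows "ennreal (1 / (pi / 2) ^ CARD('n)) *
           (\<integral>\<^sup>+ u. indicator {u :: real ^ 'n. (\<Sum>j\<in>UNIV. \<bar>u $ j\<bar>) > s} u *
               ennreal (\<Prod>j\<in>UNIV. 1 / (1 + (u $ j)\<^sup>2)\<^sup>2) \<partial>lborel)
         \<le> ennreal (real CARD('n) / (s - real CARD('n))\<^sup>2)"
proof -
  define M where "M = real CARD('n)"
  define G where "G = pi/2"
  define r where "r = 2/pi"
  define c where "c = M * r"
  define S where "S u = (\<Sum>j\<in>UNIV. \<bar>u $ j\<bar>)" for u :: "real^'n"
  define Q where "Q = G^CARD('n) * M * (1 - r^2)"
  have G0: "G > 0" by (simp add: G_def)
  have r0: "0 \<le> r" "r \<le> 1" using pi_ge2 by (auto simp: r_def field_simps)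
  have M0: "M \<ge> 0" by (simp add: M_def)
  have cM: "c \<le> M" unfolding c_def using r0 M0 by (simp add: mult_left_le)
  have c0: "0 \<le> c" unfolding c_def using r0 M0 by simp
  have sM: "s > M" using assms by (simp add: M_def)
  have HS: "has_bochner_integral lborel (\<lambda>u. S u * ww u) (\<Sum>i\<in>(UNIV::'n set). (pi/2)^CARD('n) * (2/pi))"
  proof -
    have "has_bochner_integral lborel (\<lambda>u::real^'n. \<Sum>i\<in>UNIV. \<bar>u$i\<bar> * ww u) (\<Sum>i\<in>(UNIV::'n set). (pi/2)^CARD('n) * (2/pi))"
      by (rule has_bochner_integral_sum) (rule H1)
    then show ?thesis by (simp add: S_def sum_distrib_right)
  qed
  have HSS: "has_bochner_integral lborel (\<lambda>u. (S u)^2 * ww u)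
      (\<Sum>i\<in>(UNIV::'n set). \<Sum>k\<in>(UNIV::'n set). (pi/2)^CARD('n) * (if i = k then 1 else (2/pi)^2))"
  proof -
    have "has_bochner_integral lborel (\<lambda>u::real^'n. \<Sum>i\<in>UNIV. \<Sum>k\<in>UNIV. \<bar>u$i\<bar> * \<bar>u$k\<bar> * ww u)
      (\<Sum>i\<in>(UNIV::'n set). \<Sum>k\<in>(UNIV::'n set). (pi/2)^CARD('n) * (if i = k then 1 else (2/pi)^2))"
      by (intro has_bochner_integral_sum) (rule H2)
    moreover have "(S u)^2 * ww u = (\<Sum>i\<in>UNIV. \<Sum>k\<in>UNIV. \<bar>u$i\<bar> * \<bar>u$k\<bar> * ww u)" for u
      unfolding S_def power2_eq_square sum_product by (simp add: sum_distrib_right)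
    ultimately show ?thesis by simp
  qed
  have sumS: "(\<Sum>i\<in>(UNIV::'n set). (pi/2)^CARD('n) * (2/pi)) = G^CARD('n) * M * r"
    by (simp add: G_def M_def r_def)
  have sumSS: "(\<Sum>i\<in>(UNIV::'n set). \<Sum>k\<in>(UNIV::'n set). (pi/2)^CARD('n) * (if i = k then 1 else (2/pi)^2))
       = G^CARD('n) * M * (M * r^2 + (1 - r^2))"
  proof -
    have "\<And>i k::'n. (pi/2)^CARD('n) * (if i = k then 1 else (2/pi)^2) = G^CARD('n) * r^2 + (if k = i then G^CARD('n) * (1 - r^2) else 0)"
      by (auto simp: G_def r_def algebra_simps)
    then have "(\<Sum>i\<in>(UNIV::'n set). \<Sum>k\<in>(UNIV::'n set). (pi/2)^CARD('n) * (if i = k then 1 else (2/pi)^2))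
       = (\<Sum>i\<in>(UNIV::'n set). \<Sum>k\<in>(UNIV::'n set). G^CARD('n) * r^2 + (if k = i then G^CARD('n) * (1 - r^2) else 0))"
      by simp
    also have "\<dots> = (\<Sum>i\<in>(UNIV::'n set). M * G^CARD('n) * r^2 + G^CARD('n) * (1 - r^2))"
      by (simp add: sum.distrib sum.delta M_def)
    also have "\<dots> = G^CARD('n) * M * (M * r^2 + (1 - r^2))"
      by (simp add: M_def algebra_simps)
    finally show ?thesis .
  qed
  have HQ: "has_bochner_integral lborel (\<lambda>u. (S u - c)^2 * ww u) Q"
  proof -
    have "has_bochner_integral lborel (\<lambda>u. (S u)^2 * ww u - 2 * c * (S u * ww u) + c^2 * ww u)
        (G^CARD('n) * M * (M * r^2 + (1 - r^2)) - 2 * c * (G^CARD('n) * M * r) + c^2 * (pi/2)^CARD('n))"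
      using HSS HS H0[where 'n='n] unfolding sumS sumSS
      by (intro has_bochner_integral_add has_bochner_integral_diff has_bochner_integral_mult_right) auto
    moreover have "(G^CARD('n) * M * (M * r^2 + (1 - r^2)) - 2 * c * (G^CARD('n) * M * r) + c^2 * (pi/2)^CARD('n)) = Q"
      by (simp add: Q_def c_def G_def power2_eq_square algebra_simps)
    moreover have "(S u)^2 * ww u - 2 * c * (S u * ww u) + c^2 * ww u = (S u - c)^2 * ww u" for u
      by (simp add: power2_eq_square algebra_simps)
    ultimately show ?thesis by simp
  qed
  have intQ: "(\<integral>\<^sup>+u. ennreal ((S u - c)^2 * ww u) \<partial>lborel) = ennreal Q"
  proof -
    have "integrable lborel (\<lambda>u. (S u - c)^2 * ww u)" "integral\<^sup>L lborel (\<lambda>u. (S u - c)^2 * ww u) = Q"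
      using HQ by (auto simp: has_bochner_integral_iff)
    then show ?thesis
      by (subst nn_integral_eq_integral) (auto simp: ww_nonneg)
  qed
  define d where "d = s - c"
  have d0: "d > 0" "d \<ge> s - M" using cM sM by (auto simp: d_def)
  have pw: "indicator {u :: real ^ 'n. (\<Sum>j\<in>UNIV. \<bar>u $ j\<bar>) > s} u * ennreal (\<Prod>j\<in>UNIV. 1 / (1 + (u $ j)\<^sup>2)\<^sup>2)
     \<le> ennreal (1 / d^2) * ennreal ((S u - c)^2 * ww u)" for u
  proof (cases "S u > s")
    case True
    have "d \<le> S u - c" using True by (simp add: d_def)
    then have "d^2 \<le> (S u - c)^2" using d0 by (intro power_mono) auto
    then have "1 \<le> (S u - c)^2 / d^2" using d0 by simp
    then have "ww u \<le> (1 / d^2) * ((S u - c)^2 * ww u)"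
      using ww_nonneg[of u] mult_right_mono[of 1 "(S u - c)^2 / d^2" "ww u"] by simp
    then have le: "ennreal (ww u) \<le> ennreal ((1 / d^2) * ((S u - c)^2 * ww u))" by (rule ennreal_leI)
    have eq: "ennreal (1 / d^2) * ennreal ((S u - c)^2 * ww u) = ennreal ((1 / d^2) * ((S u - c)^2 * ww u))"
      by (subst ennreal_mult) (auto simp: ww_nonneg)
    have ie: "indicator {u :: real ^ 'n. (\<Sum>j\<in>UNIV. \<bar>u $ j\<bar>) > s} u * ennreal (\<Prod>j\<in>UNIV. 1 / (1 + (u $ j)\<^sup>2)\<^sup>2) = ennreal (ww u)"
      using True by (simp add: S_def ww_def gg_def)
    show ?thesis unfolding eq ie by (rule le)
  next
    case False
    then show ?thesis by (simp add: S_def)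
  qed
  have "(\<integral>\<^sup>+ u. indicator {u :: real ^ 'n. (\<Sum>j\<in>UNIV. \<bar>u $ j\<bar>) > s} u *
               ennreal (\<Prod>j\<in>UNIV. 1 / (1 + (u $ j)\<^sup>2)\<^sup>2) \<partial>lborel)
        \<le> (\<integral>\<^sup>+u. ennreal (1 / d^2) * ennreal ((S u - c)^2 * ww u) \<partial>lborel)"
    by (intro nn_integral_mono pw)
  also have "\<dots> = ennreal (1 / d^2) * ennreal Q"
    unfolding S_def by (subst nn_integral_cmult) (auto simp: intQ[unfolded S_def])
  finally have I: "(\<integral>\<^sup>+ u. indicator {u :: real ^ 'n. (\<Sum>j\<in>UNIV. \<bar>u $ j\<bar>) > s} u *
               ennreal (\<Prod>j\<in>UNIV. 1 / (1 + (u $ j)\<^sup>2)\<^sup>2) \<partial>lborel) \<le> ennreal (1 / d^2) * ennreal Q" .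
  have Q0: "0 \<le> Q" using r0 M0 G0 by (simp add: Q_def power_le_one)
  have "ennreal (1 / (pi / 2) ^ CARD('n)) * (\<integral>\<^sup>+ u. indicator {u :: real ^ 'n. (\<Sum>j\<in>UNIV. \<bar>u $ j\<bar>) > s} u *
               ennreal (\<Prod>j\<in>UNIV. 1 / (1 + (u $ j)\<^sup>2)\<^sup>2) \<partial>lborel)
      \<le> ennreal (1 / (pi / 2) ^ CARD('n)) * (ennreal (1 / d^2) * ennreal Q)"
    by (rule mult_left_mono[OF I]) simp
  also have "\<dots> = ennreal (1 / G ^ CARD('n) * (1 / d^2 * Q))"
  proof -
    have a: "ennreal (1 / d^2) * ennreal Q = ennreal (1 / d^2 * Q)"
      by (rule ennreal_mult[symmetric]) (auto simp: Q0)
    have b: "ennreal (1 / (pi / 2) ^ CARD('n)) * ennreal (1 / d^2 * Q) = ennreal (1 / G ^ CARD('n) * (1 / d^2 * Q))"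
      unfolding G_def by (rule ennreal_mult[symmetric]) (auto simp: Q0)
    show ?thesis by (simp only: a b)
  qed
  also have "\<dots> \<le> ennreal (real CARD('n) / (s - real CARD('n))\<^sup>2)"
  proof (rule ennreal_leI)
    have "1 / G ^ CARD('n) * (1 / d^2 * Q) = M * (1 - r^2) / d^2"
    proof -
      have gp: "G ^ CARD('n) \<noteq> 0" using G0 by simp
      have dp: "d^2 \<noteq> 0" using d0 by simp
      show ?thesis using gp dp by (simp add: Q_def field_simps)
    qed
    also have "\<dots> \<le> M / d^2"
      using M0 r0 d0 by (intro divide_right_mono) (auto simp: mult_left_le)
    also have "\<dots> \<le> M / (s - M)^2"
      using M0 d0 sM by (intro divide_left_mono power_mono mult_pos_pos) auto
    finally show "1 / G ^ CARD('n) * (1 / d^2 * Q) \<le> real CARD('n) / (s - real CARD('n))\<^sup>2"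
      by (simp add: M_def)
  qed
  finally show ?thesis .
qed

end
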